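(* Let $Q$ be a fixed positive integer and let $k$ be any positive integer. Then for every integer $i$, \[ \nu_k(\gamma_i)=\left(\frac{2k-1}{2}\right)K_{k-1}\Big(-\nu_2(\gamma_i),\ \nu_2(\gamma_{i+1}),\ \ldots,\ (-1)^{k-1}\nu_2(\gamma_{i+k-2})\Big), \] where the $j$-th argument of $K_{k-1}$ (for $1\le j\le k-1$) is $(-1)^j\nu_2(\gamma_{i+j-1})$ (for $k=1$ the right-hand side is $\left(\frac{1}{2}\right)K_0=1$).
   Context: For $Q\in\mathbb{N}$, the Farey fractions of order $Q$ are $\mathcal{F}_Q=\{a/q\in\mathbb{Q}: 1\le q\le Q,\ 0<a\le q,\ \gcd(a,q)=1\}$. Write $\mathcal{F}_Q=\{\gamma_1,\ldots,\gamma_{N(Q)}\}$ with $1/Q=\gamma_1<\gamma_2<\cdots<\gamma_{N(Q)}=1$, and extend to all $i\in\mathbb{Z}$ by $\gamma_{i+N(Q)}=\gamma_i+1$. For each $i$ write $\gamma_i=p_i/q_i$ in lowest terms with $q_i>0$. For a positive integer $k$, the $k$-index of $\gamma_i$ is $\nu_k(\gamma_i)=p_{i+k-1}q_{i-1}-p_{i-1}q_{i+k-1}$ (this depends on $Q$; note $\nu_1\equiv1$). The convergent polynomials are defined by $K_0=1$, $K_1(x_1)=x_1$, and $K_n(x_1,\ldots,x_n)=x_nK_{n-1}(x_1,\ldots,x_{n-1})+K_{n-2}(x_1,\ldots,x_{n-2})$ for $n\ge2$. The Kronecker symbol $\left(\frac{n}{2}\right)$ is $0$ if $n$ is even, $1$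 if $n\equiv\pm1\pmod 8$, and $-1$ if $n\equiv\pm3\pmod 8$. *)

theory Defs
  imports Complex_Main
begin

definition farey_set :: "nat \<Rightarrow> rat set" where
  "farey_set Q = {r. 0 < r \<and> r \<le> 1 \<and> snd (quotient_of r) \<le> int Q}"

definition farey_N :: "nat \<Rightarrow> nat" where
  "farey_N Q = card (farey_set Q)"

(* gamma_i for i \<in> \<int>, with gamma_1 < ... < gamma_N = 1 and gamma_{i+N} = gamma_i + 1 *)
definition farey_gamma :: "nat \<Rightarrow> int \<Rightarrow> rat" where
  "farey_gamma Q i =
     sorted_list_of_set (farey_set Q) ! nat ((i - 1) mod int (farey_N Q))
     + of_int ((i - 1) div int (farey_N Q))"

definition farey_p :: "nat \<Rightarrow> int \<Rightarrow> int" where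
  "farey_p Q i = fst (quotient_of (farey_gamma Q i))"

definition farey_q :: "nat \<Rightarrow> int \<Rightarrow> int" where
  "farey_q Q i = snd (quotient_of (farey_gamma Q i))"

definition farey_nu :: "nat \<Rightarrow> nat \<Rightarrow> int \<Rightarrow> int" where
  "farey_nu Q k i = farey_p Q (i + int k - 1) * farey_q Q (i - 1)
                    - farey_p Q (i - 1) * farey_q Q (i + int k - 1)"

(* convergent polynomials K_n(x_1,...,x_n); arguments given as x 1, ..., x n *)
fun convK :: "nat \<Rightarrow> (nat \<Rightarrow> int) \<Rightarrow> int" where
  "convK 0 x = 1"
| "convK (Suc 0) x = x 1"
| "convK (Suc (Suc n)) x = x (n + 2) * convK (Suc n) x + convK n x"

definition kron2 :: "int \<Rightarrow> int" where
  "kron2 n = (if even n then 0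
              else if n mod 8 = 1 \<or> n mod 8 = 7 then 1 else -1)"

end

theory Submission
  imports Defs
begin


lemma qo_div: assumes "y > 0" "coprime x y"
  shows "quotient_of (of_int x / of_int y) = (x, y)"
  using assms by (simp add: Fract_of_int_quotient[symmetric] quotient_of_Fract)

lemma farey_mem: assumes "r \<in> farey_set Q" "quotient_of r = (a,b)"
  shows "1 \<le> a" "a \<le> b" "b \<le> int Q" "0 < b" "coprime a b" "r = of_int a / of_int b"
proof -
  show b: "0 < b" using quotient_of_denom_pos assms(2) by blast
  show r: "r = of_int a / of_int b" using quotient_of_div assms(2) by blast
  show "coprime a b" using quotient_of_coprime assms(2) by blast
  show "b \<le> int Q" using assms unfolding farey_set_def by auto
  have "0 < r" "r \<le> 1" using assms unfolding farey_set_def by auto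
  then show "1 \<le> a" "a \<le> b" using b r by (auto simp: field_simps)
qed

lemma farey_finite: "finite (farey_set Q)"
proof -
  have "farey_set Q \<subseteq> (\<lambda>(a,b). of_int a / of_int b) ` ({1..int Q} \<times> {1..int Q})"
  proof
    fix r assume r: "r \<in> farey_set Q"
    obtain a b where ab: "quotient_of r = (a,b)" by (cases "quotient_of r")
    from farey_mem[OF r ab] show "r \<in> (\<lambda>(a,b). of_int a / of_int b) ` ({1..int Q} \<times> {1..int Q})"
      by (intro image_eqI[where x="(a,b)"]) auto
  qed
  then show ?thesis by (rule finite_subset) auto
qed

lemma neighbor:
  assumes r: "r \<in> farey_set Q" and s: "s \<in> farey_set Q" and rs: "r < s"
    and nb: "\<forall>z\<in>farey_set Q. \<not> (r < z \<and> z < s)"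
    and qr: "quotient_of r = (a,b)" and qs: "quotient_of s = (c,d)"
  shows "b*c - a*d = 1"
proof -
  note R = farey_mem[OF r qr] and S = farey_mem[OF s qs]
  obtain u v where uv: "u*a + v*b = 1"
    using R(5) by (metis bezout_int coprime_iff_gcd_eq_1)
  define t where "t = (int Q + u) div b"
  define y where "y = -u + t*b"
  define x where "x = v + t*a"
  have bxy: "b*x - a*y = 1" using uv unfolding x_def y_def by (simp add: algebra_simps)
  have m: "int Q - y = (int Q + u) mod b" unfolding y_def t_def
    by (simp add: algebra_simps minus_div_mult_eq_mod[symmetric])
  have "0 \<le> (int Q + u) mod b" "(int Q + u) mod b < b" using R(4) by auto
  hence y1: "y \<le> int Q" "int Q - b < y" using m by auto
  hence ypos: "0 < y" using R(3) by linarith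
  have cxy: "coprime x y"
  proof (rule coprimeI)
    fix e assume "e dvd x" "e dvd y"
    then have "e dvd b*x - a*y" by auto
    then show "is_unit e" using bxy by simp
  qed
  define w where "w = (of_int x / of_int y :: rat)"
  have qw: "quotient_of w = (x,y)" unfolding w_def by (rule qo_div[OF ypos cxy])
  have "a*y < b*x" using bxy by linarith
  hence "(of_int (a*y)::rat) < of_int (b*x)" by (simp only: of_int_less_iff)
  hence rw: "r < w" unfolding w_def R(6) using R(4) ypos
    by (simp add: field_simps)
  have "r < 1" using rs s unfolding farey_set_def by auto
  hence ab: "a < b" using R(4) R(6) by (simp add: field_simps)
  have w1: "w \<le> 1"
  proof -
    have "(a+1)*y \<le> b*y" using ab ypos by (intro mult_right_mono) auto
    hence "a*y + 1 \<le> b*y" using ypos by (simp add: algebra_simps)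
    hence "b*x \<le> b*y" using bxy by linarith
    hence "x \<le> y" using R(4) by simp
    then show ?thesis unfolding w_def using ypos by simp
  qed
  have "0 < r" using r unfolding farey_set_def by auto
  hence "w \<in> farey_set Q" unfolding farey_set_def using rw w1 y1 qw by auto
  hence sw: "s \<le> w" using nb rw by force
  have "(of_int (a*d)::rat) < of_int (c*b)" using rs R(4,6) S(4,6) by (simp add: field_simps)
  hence ad: "a*d < c*b" by (simp only: of_int_less_iff)
  have "(x*d - c*y)*b + (c*b - a*d)*y = d*(b*x - a*y)" by (simp add: algebra_simps)
  hence key: "d = (x*d - c*y)*b + (c*b - a*d)*y" using bxy by simp
  show ?thesis
  proof (cases "s = w")
    case False
    hence "s < w" using sw by simp
    hence "(of_int (c*y)::rat) < of_int (x*d)" unfolding w_def S(6) using ypos S(4) by (simp add: field_simps)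
    hence "c*y < x*d" by (simp only: of_int_less_iff)
    hence "(x*d - c*y)*b \<ge> b" "(c*b - a*d)*y \<ge> y" using ad R(4) ypos by auto
    hence "d \<ge> b + y" using key by linarith
    then show ?thesis using y1 S(3) by linarith
  next
    case True
    hence "x = c" "y = d" using qw qs by auto
    hence "d * (c*b - a*d) = d * 1" using key by (simp add: algebra_simps)
    hence "c*b - a*d = 1" using S(4) by (subst (asm) mult_left_cancel) auto
    thus ?thesis by (simp add: algebra_simps)
  qed
qed

lemma qo_shift: assumes "quotient_of r = (a,b)"
  shows "quotient_of (r + of_int t) = (a + t*b, b)"
proof -
  have b: "0 < b" "coprime a b" using quotient_of_denom_pos quotient_of_coprime assms by blast+
  have "r + of_int t = of_int (a + t*b) / of_int b" using quotient_of_div[OF assms] b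
    by (simp add: field_simps)
  moreover have "coprime (a + t*b) b"
  proof (rule coprimeI)
    fix e assume "e dvd a + t*b" "e dvd b"
    then have "e dvd (a + t*b) - t*b" by (intro dvd_diff) auto
    hence "e dvd a" by simp
    thus "is_unit e" using b(2) \<open>e dvd b\<close> coprime_common_divisor by blast
  qed
  ultimately show ?thesis using qo_div[of b "a + t*b"] b by simp
qed

lemma farey_one: "(1::rat) \<in> farey_set Q \<longleftrightarrow> Q \<ge> 1"
  unfolding farey_set_def by auto

lemma qo_invQ: "Q \<ge> 1 \<Longrightarrow> quotient_of (1 / of_nat Q :: rat) = (1, int Q)"
  using qo_div[of "int Q" 1] by simp

lemma farey_invQ: "Q \<ge> 1 \<Longrightarrow> (1 / of_nat Q :: rat) \<in> farey_set Q"
  unfolding farey_set_def using qo_invQ[of Q] by simp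

lemma farey_ge: "r \<in> farey_set Q \<Longrightarrow> 1 / of_nat Q \<le> r"
proof -
  assume r: "r \<in> farey_set Q"
  obtain a b where ab: "quotient_of r = (a,b)" by (cases "quotient_of r")
  note R = farey_mem[OF r ab]
  have "1 / rat_of_int b \<le> of_int a / of_int b" using R by (simp add: divide_right_mono)
  moreover have "rat_of_int b \<le> of_int (int Q)" using R(3) by (simp only: of_int_le_iff)
  hence "1 / rat_of_nat Q \<le> 1 / of_int b" using R(4)
    by (intro divide_left_mono) auto
  ultimately show ?thesis using R(6) by simp
qed

lemma farey_le1: "r \<in> farey_set Q \<Longrightarrow> r \<le> 1"
  unfolding farey_set_def by auto

context fixes Q :: nat assumes Q: "Q \<ge> 1"
begin

abbreviation "L \<equiv> sorted_list_of_set (farey_set Q)"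

lemma L_facts: "set L = farey_set Q" "sorted_wrt (<) L" "length L = farey_N Q" "farey_N Q \<ge> 1"
proof -
  show "set L = farey_set Q" "sorted_wrt (<) L" "length L = farey_N Q"
    using farey_finite[of Q] by (auto simp: farey_N_def)
  have "card (farey_set Q) > 0" using farey_finite[of Q] farey_one[of Q] Q card_gt_0_iff by blast
  then show "farey_N Q \<ge> 1" unfolding farey_N_def by simp
qed

lemma L_nth_in: "n < farey_N Q \<Longrightarrow> L ! n \<in> farey_set Q"
  using L_facts nth_mem by metis

lemma L_mono: "m \<le> n \<Longrightarrow> n < farey_N Q \<Longrightarrow> L ! m \<le> L ! n"
  using L_facts(3) sorted_sorted_list_of_set sorted_nth_mono by metis

lemma L_first: "L ! 0 = 1 / of_nat Q"
proof -
  obtain m where m: "m < farey_N Q" "L ! m = 1 / of_nat Q"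
    using farey_invQ[OF Q] L_facts by (metis in_set_conv_nth)
  have "L ! 0 \<le> L ! m" using L_mono[of 0 m] m(1) by simp
  moreover have "1 / of_nat Q \<le> L ! 0" using farey_ge L_nth_in L_facts(4) by simp
  ultimately show ?thesis using m by simp
qed

lemma L_last: "L ! (farey_N Q - 1) = 1"
proof -
  obtain m where m: "m < farey_N Q" "L ! m = 1"
    using farey_one[of Q] Q L_facts by (metis in_set_conv_nth)
  have "L ! m \<le> L ! (farey_N Q - 1)" using L_mono[of m "farey_N Q - 1"] m(1) L_facts(4) by simp
  moreover have "L ! (farey_N Q - 1) \<le> 1" using farey_le1 L_nth_in[of "farey_N Q - 1"] L_facts(4) by simp
  ultimately show ?thesis using m by simp
qed

lemma L_det: assumes "n + 1 < farey_N Q"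
    "quotient_of (L!n) = (a,b)" "quotient_of (L!(n+1)) = (c,d)"
  shows "b*c - a*d = 1"
proof (rule neighbor[OF L_nth_in L_nth_in _ _ assms(2,3)])
  show "n < farey_N Q" "n+1 < farey_N Q" using assms by auto
  show "L!n < L!(n+1)" using L_facts(2,3) assms(1) sorted_wrt_nth_less by fastforce
  show "\<forall>z\<in>farey_set Q. \<not> (L ! n < z \<and> z < L ! (n + 1))"
  proof (intro ballI notI)
    fix z assume "z \<in> farey_set Q" "L ! n < z \<and> z < L ! (n + 1)"
    then obtain m where m: "m < farey_N Q" "L!m = z" using L_facts by (metis in_set_conv_nth)
    have "\<not> m \<le> n" using L_mono[of m n] m \<open>L ! n < z \<and> _\<close> assms by auto
    moreover have "\<not> n + 1 \<le> m" using L_mono[of "n+1" m] m \<open>L ! n < z \<and> _\<close> by auto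
    ultimately show False by simp
  qed
qed

lemma divmod_aux: fixes N t r :: int assumes "0 \<le> r" "r < N"
  shows "(N*t + r) div N = t" "(N*t + r) mod N = r"
  using assms by (simp_all add: algebra_simps)

lemma pq_formula: assumes "quotient_of (L ! nat ((i-1) mod int (farey_N Q))) = (a,b)"
  shows "farey_p Q i = a + ((i-1) div int (farey_N Q)) * b" "farey_q Q i = b"
  unfolding farey_p_def farey_q_def farey_gamma_def using qo_shift[OF assms] by simp_all

lemma det_all: "farey_p Q (i+1) * farey_q Q i - farey_p Q i * farey_q Q (i+1) = 1"
proof -
  define N where "N = int (farey_N Q)"
  have N1: "N \<ge> 1" using L_facts(4) N_def by simp
  define j where "j = i - 1"
  define m where "m = j mod N"
  define t where "t = j div N"
  have jm: "j = N*t + m" "0 \<le> m" "m < N" using N1 unfolding m_def t_def by simp_all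
  obtain a b where ab: "quotient_of (L ! nat m) = (a,b)" by (cases "quotient_of (L ! nat m)")
  have pi: "farey_p Q i = a + t*b" "farey_q Q i = b"
    using pq_formula[of i a b] ab unfolding m_def t_def j_def N_def by simp_all
  show ?thesis
  proof (cases "m + 1 < N")
    case True
    have e: "(i+1-1) div N = t" "(i+1-1) mod N = m+1"
      using divmod_aux[of "m+1" N t] True jm unfolding j_def by (simp_all add: algebra_simps)
    obtain c d where cd: "quotient_of (L ! (nat m + 1)) = (c,d)" by (cases "quotient_of (L ! (nat m + 1))")
    have "nat (m+1) = nat m + 1" using jm by simp
    hence pi1: "farey_p Q (i+1) = c + t*d" "farey_q Q (i+1) = d"
      using pq_formula[of "i+1" c d] cd e unfolding N_def by simp_all
    have "b*c - a*d = 1" using L_det[of "nat m" a b c d] True ab cd jm unfolding N_def by simp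
    then show ?thesis unfolding pi pi1 by (simp add: algebra_simps)
  next
    case False
    hence mN: "m = N - 1" using jm by simp
    have e: "(i+1-1) div N = t + 1" "(i+1-1) mod N = 0"
      using divmod_aux[of 0 N "t+1"] N1 jm mN unfolding j_def by (simp_all add: algebra_simps)
    have "nat m = farey_N Q - 1" using mN N_def by simp
    hence "L ! nat m = 1" using L_last by simp
    hence ab1: "a = 1" "b = 1" using ab by simp_all
    have pi1: "farey_p Q (i+1) = 1 + (t+1) * int Q" "farey_q Q (i+1) = int Q"
      using pq_formula[of "i+1" 1 "int Q"] e L_first qo_invQ[OF Q] unfolding N_def by simp_all
    show ?thesis unfolding pi pi1 ab1 by (simp add: algebra_simps)
  qed
qed

end



lemma nu_rec: assumes Q: "Q \<ge> 1"
  shows "farey_nu Q (n+2) i = farey_nu Q 2 (i + int n) * farey_nu Q (n+1) i - farey_nu Q n i"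
proof -
  have d1: "farey_p Q (i+int n) * farey_q Q (i+int n-1) - farey_p Q (i+int n-1) * farey_q Q (i+int n) = 1"
    using det_all[OF Q, of "i+int n-1"] by simp
  have d2: "farey_p Q (i+int n+1) * farey_q Q (i+int n) - farey_p Q (i+int n) * farey_q Q (i+int n+1) = 1"
    using det_all[OF Q, of "i+int n"] by simp
  have e1: "farey_nu Q (n+2) i = farey_p Q (i+int n+1) * farey_q Q (i-1) - farey_p Q (i-1) * farey_q Q (i+int n+1)"
    unfolding farey_nu_def by (simp add: algebra_simps)
  have e2: "farey_nu Q (n+1) i = farey_p Q (i+int n) * farey_q Q (i-1) - farey_p Q (i-1) * farey_q Q (i+int n)"
    unfolding farey_nu_def by (simp add: algebra_simps)
  have e3: "farey_nu Q n i = farey_p Q (i+int n-1) * farey_q Q (i-1) - farey_p Q (i-1) * farey_q Q (i+int n-1)"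
    unfolding farey_nu_def by (simp add: algebra_simps)
  have e4: "farey_nu Q 2 (i+int n) = farey_p Q (i+int n+1) * farey_q Q (i+int n-1) - farey_p Q (i+int n-1) * farey_q Q (i+int n+1)"
    unfolding farey_nu_def by (simp add: algebra_simps)
  show ?thesis unfolding e1 e2 e3 e4
    using d1 d2 by algebra
qed

lemma kron_closed: "kron2 (2*int n + 1) = (if n mod 4 = 0 \<or> n mod 4 = 3 then 1 else -1)"
proof -
  have "(2*int n + 1) mod 8 = 2 * int (n mod 4) + 1" by presburger
  moreover have "n mod 4 < 4" by simp
  ultimately show ?thesis unfolding kron2_def by (auto simp: even_add)
qed

lemma kr: "kron2 (2*int n+5) = - kron2 (2*int n+1)"
    "(-1)^n * kron2 (2*int n+5) = kron2 (2*int n+3)"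
proof -
  have a: "kron2 (2*int n+5) = kron2 (2*int (n+2)+1)" "kron2 (2*int n+3) = kron2 (2*int (n+1)+1)"
    by (simp_all add: algebra_simps)
  have "(-1::int)^n = (if n mod 4 = 0 \<or> n mod 4 = 2 then 1 else -1)"
    by (auto simp: minus_one_power_iff) presburger+
  then show "kron2 (2*int n+5) = - kron2 (2*int n+1)"
    "(-1)^n * kron2 (2*int n+5) = kron2 (2*int n+3)"
    unfolding a kron_closed by (auto; presburger)+
qed


theorem theorem1:
  fixes Q k :: nat and i :: int
  assumes "Q \<ge> 1" and "k \<ge> 1"
  shows "farey_nu Q k i =
           kron2 (2 * int k - 1) *
           convK (k - 1) (\<lambda>j. (-1) ^ j * farey_nu Q 2 (i + int j - 1))"
proof -
  define x where "x = (\<lambda>j::nat. (-1) ^ j * farey_nu Q 2 (i + int j - 1))"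
  have nu0: "farey_nu Q 0 i = 0" unfolding farey_nu_def by simp
  have nu1: "farey_nu Q 1 i = 1" unfolding farey_nu_def using det_all[OF assms(1), of "i-1"] by simp
  have "farey_nu Q (n+1) i = kron2 (2*int n + 1) * convK n x \<and>
        farey_nu Q (n+2) i = kron2 (2*int n + 3) * convK (n+1) x" for n
  proof (induction n)
    case 0
    have k3: "kron2 3 = -1" "kron2 1 = 1" by (simp_all add: kron2_def)
    show ?case using nu1 k3 by (simp add: x_def numeral_2_eq_2)
  next
    case (Suc n)
    have r: "farey_nu Q (n+3) i = farey_nu Q 2 (i + int n + 1) * farey_nu Q (n+2) i - farey_nu Q (n+1) i"
    proof -
      have h: "farey_nu Q (n+1+2) i = farey_nu Q 2 (i + int (n+1)) * farey_nu Q (n+1+1) i - farey_nu Q (n+1) i"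
        by (rule nu_rec[OF assms(1)])
      have e: "n+1+2 = n+3" "n+1+1 = n+2" "i + int (n+1) = i + int n + 1" by simp_all
      from h show ?thesis unfolding e .
    qed
    have c: "convK (n+2) x = (-1)^n * farey_nu Q 2 (i + int n + 1) * convK (n+1) x + convK n x"
      unfolding x_def by (simp add: algebra_simps)
    have s5: "kron2 (2*int n+5) = - kron2 (2*int n+1)"
      and s53: "(-1)^n * kron2 (2*int n+5) = kron2 (2*int n+3)" using kr by blast+
    have "farey_nu Q (n+3) i = kron2 (2*int n+5) * convK (n+2) x"
    proof -
      have "farey_nu Q (n+3) i = farey_nu Q 2 (i + int n + 1) * (kron2 (2*int n + 3) * convK (n+1) x)
              - kron2 (2*int n + 1) * convK n x" using r Suc.IH by simp
      also have "\<dots> = kron2 (2*int n+5) * ((-1)^n * farey_nu Q 2 (i + int n + 1) * convK (n+1) x + convK n x)"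
        unfolding s53[symmetric] s5 by (simp add: algebra_simps)
      also have "\<dots> = kron2 (2*int n+5) * convK (n+2) x" unfolding c ..
      finally show ?thesis .
    qed
    note n3 = this
    show ?case
    proof (rule conjI)
      have "farey_nu Q (Suc n + 1) i = farey_nu Q (n+2) i" by simp
      also have "\<dots> = kron2 (2*int n+3) * convK (n+1) x" using Suc.IH by blast
      also have "2*int n+3 = 2 * int (Suc n) + 1" by simp
      also have "n+1 = Suc n" by simp
      finally show "farey_nu Q (Suc n + 1) i = kron2 (2 * int (Suc n) + 1) * convK (Suc n) x" .
    next
      have "farey_nu Q (Suc n + 2) i = farey_nu Q (n+3) i" by (simp add: numeral_3_eq_3)
      also have "\<dots> = kron2 (2*int n+5) * convK (n+2) x" by (rule n3)
      also have "2*int n+5 = 2 * int (Suc n) + 3" by simp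
      also have "n+2 = Suc n + 1" by simp
      finally show "farey_nu Q (Suc n + 2) i = kron2 (2 * int (Suc n) + 3) * convK (Suc n + 1) x" .
    qed
  qed
  then have "farey_nu Q ((k-1)+1) i = kron2 (2*int (k-1) + 1) * convK (k-1) x" by blast
  moreover have "(k-1)+1 = k" "2*int (k-1) + 1 = 2 * int k - 1" using assms(2) by auto
  ultimately show ?thesis unfolding x_def by simp
qed

end
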